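(* Let $\eta\in(0,1)$ and $\mathcal N_S>0$. For $N_S>0$ and $\xi\in[0,1]$ let $$I(\xi;N_S)=4N_S\left\{\frac{1-\xi}{1-2\eta^2\left(\sqrt{\xi N_S(1+\xi N_S)}-\xi N_S\right)}+\frac{\xi\left[(1-\eta^2)^2+\eta^4\right]}{(1-\eta^2)\left(1+2\xi N_S\eta^2(1-\eta^2)\right)}\right\},$$ and for real $M\ge1$ define the total quantum Fisher information $\mathcal I(M)=\max_{\xi\in[0,1]}M\,I(\xi;\mathcal N_S/M)$. Then the optimal number of probes is either $M=1$ or $M=\infty$, i.e. $\sup_{M\ge1}\mathcal I(M)=\max\{\mathcal I(1),\lim_{M\to\infty}\mathcal I(M)\}$.
   Context: $I(\xi;N_S)$ is the quantum Fisher information for estimating the transmission $\eta$ of a pure-loss (zero-temperature) bosonic channel with one single-mode pure displaced squeezed probe of mean photon number $N_S$, a fraction $\xi$ in squeezing and $1-\xi$ in displacement. Using $M$ independent probes with a total photon budget $\mathcal N_S=MN_S$ gives total quantum Fisher information $M\,I(\xi;\mathcal N_S/M)$; the number of probes is relaxed to a continuous variable $M\ge1$, with $M=\infty$ understood as the limit. *)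

theory Defs
  imports Complex_Main
begin

definition QFI :: "real \<Rightarrow> real \<Rightarrow> real \<Rightarrow> real" where
  "QFI eta xi NS = 4 * NS *
     ((1 - xi) / (1 - 2 * eta^2 * (sqrt (xi * NS * (1 + xi * NS)) - xi * NS))
      + xi * ((1 - eta^2)^2 + eta^4) / ((1 - eta^2) * (1 + 2 * xi * NS * eta^2 * (1 - eta^2))))"

definition totalQFI :: "real \<Rightarrow> real \<Rightarrow> real \<Rightarrow> real" where
  "totalQFI eta NStot M = (SUP xi\<in>{0..1}. M * QFI eta xi (NStot / M))"

end

theory Submission imports Defs begin

definition gg :: "real \<Rightarrow> real" where "gg x = sqrt (x*(1+x)) - x"
definition AA :: "real \<Rightarrow> real \<Rightarrow> real" where "AA eta s = 1/(1 - 2*eta^2*gg s)"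
definition HH :: "real \<Rightarrow> real \<Rightarrow> real" where
  "HH eta s = ((1-eta^2)^2+eta^4)/((1-eta^2)*(1+2*s*eta^2*(1-eta^2)))"
definition FF :: "real \<Rightarrow> real \<Rightarrow> real \<Rightarrow> real" where
  "FF eta xi n = (1-xi)*AA eta (xi*n) + xi*HH eta (xi*n)"

lemma QFI_FF: "QFI eta xi n = 4*n*FF eta xi n"
  by (simp add: QFI_def FF_def AA_def HH_def gg_def mult.assoc)

lemma gg_nonneg: "x \<ge> 0 \<Longrightarrow> 0 \<le> gg x"
  unfolding gg_def by (smt (verit) mult_left_mono real_le_rsqrt power2_eq_square)

lemma gg_half: "x \<ge> 0 \<Longrightarrow> gg x < 1/2"
proof -
  assume x: "x \<ge> 0"
  have "sqrt (x*(1+x)) < sqrt ((x+1/2)^2)"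
    by (rule real_sqrt_less_mono) (simp add: power2_eq_square algebra_simps)
  also have "\<dots> = x + 1/2" using x by simp
  finally show ?thesis unfolding gg_def by simp
qed

lemma gg_sqrt: "x \<ge> 0 \<Longrightarrow> gg x \<le> sqrt x"
proof -
  assume x: "x \<ge> 0"
  have "sqrt (x*(1+x)) \<le> sqrt ((sqrt x + x)^2)"
    apply (rule real_sqrt_le_mono)
    using x by (simp add: power2_eq_square algebra_simps)
  also have "\<dots> = sqrt x + x" using x by simp
  finally show ?thesis unfolding gg_def by simp
qed


lemma e_facts: "0 < (eta::real) \<Longrightarrow> eta < 1 \<Longrightarrow> 0 < eta^2 \<and> eta^2 < 1"
proof -
  assume a: "0 < eta" "eta < 1"
  have "eta*eta < 1*1" using a mult_strict_mono[of eta 1 eta 1] by simp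
  then show ?thesis using a by (simp add: power2_eq_square)
qed

lemma AA_bounds:
  assumes "0 < eta" "eta < 1" "s \<ge> 0"
  shows "1 \<le> AA eta s" "AA eta s \<le> 1/(1-eta^2)"
proof -
  have e: "0 < eta^2" "eta^2 < 1" using e_facts assms by auto
  have g: "0 \<le> gg s" "gg s < 1/2" using gg_nonneg gg_half assms by auto
  have "eta^2*(2*gg s) < eta^2*1" by (rule mult_strict_left_mono) (use e g in linarith)+
  then have d1: "1 - 2*eta^2*gg s > 1 - eta^2" by simp
  have "0 \<le> eta^2*(2*gg s)" using e g by simp
  then have d2: "1 - 2*eta^2*gg s \<le> 1" by simp
  have d0: "1 - 2*eta^2*gg s > 0" using d1 e by linarith
  show "1 \<le> AA eta s" unfolding AA_def using d0 d2 by (simp add: le_divide_eq)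
  have p: "0 < (1 - 2*eta^2*gg s) * (1-eta^2)" using d0 e by simp
  show "AA eta s \<le> 1/(1-eta^2)" unfolding AA_def
    by (rule divide_left_mono) (use d1 p in linarith)+
qed

lemma AA_sqrt:
  assumes "0 < eta" "eta < 1" "s \<ge> 0" "s \<le> n" "2*eta^2*sqrt n < 1"
  shows "AA eta s \<le> 1/(1-2*eta^2*sqrt n)"
proof -
  have e: "0 < eta^2" "eta^2 < 1" using e_facts assms by auto
  have "gg s \<le> sqrt s" using gg_sqrt assms by auto
  also have "sqrt s \<le> sqrt n" using assms by simp
  finally have "(2*eta^2)*gg s \<le> (2*eta^2)*sqrt n" by (rule mult_left_mono) (use e in simp)
  moreover have "0 < (1-2*eta^2*gg s) * (1-2*eta^2*sqrt n)"
    using calculation assms by (intro mult_pos_pos) linarith+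
  ultimately show ?thesis unfolding AA_def
    by (intro divide_left_mono) linarith+
qed

lemma HH_bounds:
  assumes "0 < eta" "eta < 1" "s \<ge> 0"
  shows "0 \<le> HH eta s" "HH eta s \<le> HH eta 0"
proof -
  have e: "0 < eta^2" "eta^2 < 1" using e_facts assms by auto
  have p: "0 \<le> 2*s*eta^2*(1-eta^2)" using e assms by simp
  have c: "0 \<le> (1-eta^2)^2+eta^4" by simp
  have d: "0 < (1-eta^2)*(1+2*s*eta^2*(1-eta^2))" using e p by simp
  show "0 \<le> HH eta s" unfolding HH_def using c d by simp
  have "(1-eta^2)*1 \<le> (1-eta^2)*(1+2*s*eta^2*(1-eta^2))"
    by (rule mult_left_mono) (use e p in linarith)+
  moreover have "0 < (1-eta^2)*(1+2*s*eta^2*(1-eta^2)) * ((1-eta^2)*(1+2*0*eta^2*(1-eta^2)))"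
    using d e by simp
  ultimately show "HH eta s \<le> HH eta 0" unfolding HH_def
    by (intro divide_left_mono c) simp_all
qed

lemma FF_le:
  assumes "0 < eta" "eta < 1" "0 \<le> xi" "xi \<le> 1" "n \<ge> 0"
  shows "FF eta xi n \<le> 1/(1-eta^2) + HH eta 0"
proof -
  have "xi*n \<ge> 0" using assms by simp
  note A = AA_bounds[OF assms(1,2) this] and H = HH_bounds[OF assms(1,2) this]
  have "(1-xi)*AA eta (xi*n) \<le> 1/(1-eta^2)"
    using mult_left_le_one_le[of "AA eta (xi*n)" "1-xi"] A assms by linarith
  moreover have "xi*HH eta (xi*n) \<le> HH eta 0"
    using mult_left_le_one_le[of "HH eta (xi*n)" "xi"] H assms by linarith
  ultimately show ?thesis unfolding FF_def by simp
qed

lemma FF_key: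
  assumes "0 < eta" "eta < 1" "0 \<le> xi" "xi \<le> 1" "0 < n" "n \<le> N"
  shows "FF eta xi n \<le> max (FF eta (xi*n/N) N) (HH eta 0)"
proof -
  define s where "s = xi*n"
  have s0: "s \<ge> 0" using assms s_def by simp
  have N0: "N > 0" using assms by simp
  have eq: "(xi*n/N)*N = s" using N0 s_def by simp
  have "xi*n \<le> xi*N" by (rule mult_left_mono) (use assms in auto)
  then have u: "xi*n/N \<le> xi" using N0 by (simp add: divide_le_eq)
  note A = AA_bounds[OF assms(1,2) s0] and H = HH_bounds[OF assms(1,2) s0]
  show ?thesis
  proof (cases "HH eta s \<ge> AA eta s")
    case True
    have "FF eta xi n \<le> HH eta s" unfolding FF_def s_def[symmetric]
      using mult_left_mono[OF True, of "1-xi"] assms by (simp add: algebra_simps)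
    then show ?thesis using H by simp
  next
    case False
    have "FF eta xi n = AA eta s - xi*(AA eta s - HH eta s)"
      unfolding FF_def s_def by (simp add: algebra_simps)
    also have "\<dots> \<le> AA eta s - (xi*n/N)*(AA eta s - HH eta s)"
      using False u by (intro diff_left_mono mult_right_mono) linarith+
    also have "\<dots> = FF eta (xi*n/N) N" unfolding FF_def eq by (simp add: algebra_simps)
    finally show ?thesis by simp
  qed
qed


lemma T_eq:
  assumes "M > 0"
  shows "totalQFI eta N M = (SUP xi\<in>{0..1}. 4*N*FF eta xi (N/M))"
  unfolding totalQFI_def QFI_FF using assms by (intro SUP_cong) auto

lemma T_bdd:
  assumes "0 < eta" "eta < 1" "N > 0" "M > 0"
  shows "bdd_above ((\<lambda>xi. 4*N*FF eta xi (N/M)) ` {0..1})"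
proof (rule bdd_aboveI2)
  fix xi :: real assume "xi \<in> {0..1}"
  then have "FF eta xi (N/M) \<le> 1/(1-eta^2) + HH eta 0"
    using assms by (intro FF_le) auto
  then show "4*N*FF eta xi (N/M) \<le> 4*N*(1/(1-eta^2) + HH eta 0)"
    using assms by simp
qed

lemma T_upper:
  assumes "0 < eta" "eta < 1" "N > 0" "M > 0" "0 \<le> xi" "xi \<le> 1"
  shows "4*N*FF eta xi (N/M) \<le> totalQFI eta N M"
  unfolding T_eq[OF assms(4)] using assms T_bdd[OF assms(1-4)]
  by (intro cSUP_upper) auto

lemma T_least:
  assumes "M > 0" "\<And>xi. 0 \<le> xi \<Longrightarrow> xi \<le> 1 \<Longrightarrow> 4*N*FF eta xi (N/M) \<le> B"
  shows "totalQFI eta N M \<le> B"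
  unfolding T_eq[OF assms(1)] using assms by (intro cSUP_least) auto

lemma T_bound1:
  assumes "0 < eta" "eta < 1" "N > 0" "M \<ge> 1"
  shows "totalQFI eta N M \<le> max (totalQFI eta N 1) (4*N*HH eta 0)"
proof (rule T_least)
  show "M > 0" using assms by simp
  fix xi :: real assume x: "0 \<le> xi" "xi \<le> 1"
  have n: "0 < N/M" "N/M \<le> N" using assms by (auto simp: divide_le_eq)
  have "FF eta xi (N/M) \<le> max (FF eta (xi*(N/M)/N) N) (HH eta 0)"
    by (rule FF_key) (use assms x n in auto)
  also have "xi*(N/M)/N = xi/M" using assms by simp
  finally have "4*N*FF eta xi (N/M) \<le> 4*N*max (FF eta (xi/M) N) (HH eta 0)"
    using assms by simp
  also have "\<dots> = max (4*N*FF eta (xi/M) (N/1)) (4*N*HH eta 0)"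
    using assms by (simp add: max_mult_distrib_left)
  also have "\<dots> \<le> max (totalQFI eta N 1) (4*N*HH eta 0)"
    using x assms by (intro max.mono T_upper) (auto simp: divide_le_eq)
  finally show "4*N*FF eta xi (N/M) \<le> max (totalQFI eta N 1) (4*N*HH eta 0)" .
qed

lemma FF0: "FF eta 0 n = 1"
  by (simp add: FF_def AA_def gg_def)

lemma FF1: "FF eta 1 n = HH eta n"
  by (simp add: FF_def)

lemma T_lower:
  assumes "0 < eta" "eta < 1" "N > 0" "M > 0"
  shows "4*N*max 1 (HH eta (N/M)) \<le> totalQFI eta N M"
  using T_upper[OF assms, of 0] T_upper[OF assms, of 1] assms
  by (simp add: FF0 FF1 max_mult_distrib_left)

lemma T_upper2:
  assumes "0 < eta" "eta < 1" "N > 0" "M > 0" "2*eta^2*sqrt (N/M) < 1"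
  shows "totalQFI eta N M \<le> 4*N*max (1/(1-2*eta^2*sqrt (N/M))) (HH eta 0)"
proof (rule T_least)
  show "M > 0" using assms by simp
  fix xi :: real assume x: "0 \<le> xi" "xi \<le> 1"
  have n: "0 \<le> xi*(N/M)" "xi*(N/M) \<le> N/M" using assms x
    mult_left_le_one_le[of "N/M" xi] by auto
  have A: "AA eta (xi*(N/M)) \<le> 1/(1-2*eta^2*sqrt (N/M))"
    by (rule AA_sqrt) (use assms n in auto)
  have H: "HH eta (xi*(N/M)) \<le> HH eta 0" using HH_bounds(2) assms n by auto
  have "(1-xi)*AA eta (xi*(N/M)) \<le> (1-xi)*max (1/(1-2*eta^2*sqrt (N/M))) (HH eta 0)"
    using A x by (intro mult_left_mono) auto
  moreover have "xi*HH eta (xi*(N/M)) \<le> xi*max (1/(1-2*eta^2*sqrt (N/M))) (HH eta 0)"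
    using H x by (intro mult_left_mono) auto
  ultimately have "FF eta xi (N/M) \<le> max (1/(1-2*eta^2*sqrt (N/M))) (HH eta 0)"
    unfolding FF_def by (simp add: algebra_simps)
  then show "4*N*FF eta xi (N/M) \<le> 4*N*max (1/(1-2*eta^2*sqrt (N/M))) (HH eta 0)"
    using assms by simp
qed


lemma lim_NM: "N > 0 \<Longrightarrow> ((\<lambda>M::real. N/M) \<longlongrightarrow> 0) at_top"
  by (intro tendsto_divide_0[OF tendsto_const] filterlim_at_top_imp_at_infinity filterlim_ident)

theorem proposition5:
  fixes eta NStot :: real
  assumes "0 < eta" "eta < 1" "0 < NStot"
  shows "\<exists>L. (totalQFI eta NStot \<longlongrightarrow> L) at_top
           \<and> bdd_above (totalQFI eta NStot ` {1..})
           \<and> (SUP M\<in>{1..}. totalQFI eta NStot M) = max (totalQFI eta NStot 1) L"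
proof -
  define N where "N = NStot"
  have N: "N > 0" using assms N_def by simp
  define L where "L = 4*N*max 1 (HH eta 0)"
  have e: "0 < eta^2" "eta^2 < 1" using e_facts assms by auto
  have lim0: "((\<lambda>M::real. N/M) \<longlongrightarrow> 0) at_top" using lim_NM N by simp
  have limH: "((\<lambda>M. HH eta (N/M)) \<longlongrightarrow> HH eta 0) at_top"
    unfolding HH_def using e by (intro tendsto_intros lim0) auto
  have limlo: "((\<lambda>M. 4*N*max 1 (HH eta (N/M))) \<longlongrightarrow> L) at_top"
    unfolding L_def by (intro tendsto_intros limH)
  have lims: "((\<lambda>M. sqrt (N/M)) \<longlongrightarrow> 0) at_top"
    using tendsto_real_sqrt[OF lim0] by simp
  have limA: "((\<lambda>M. 1/(1-2*eta^2*sqrt (N/M))) \<longlongrightarrow> 1) at_top"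
  proof -
    have "((\<lambda>M. 1 - 2*eta^2*sqrt (N/M)) \<longlongrightarrow> 1 - 2*eta^2*0) at_top"
      by (intro tendsto_intros lims)
    from tendsto_divide[OF tendsto_const this, of 1] show ?thesis by simp
  qed
  have limhi: "((\<lambda>M. 4*N*max (1/(1-2*eta^2*sqrt (N/M))) (HH eta 0)) \<longlongrightarrow> L) at_top"
    unfolding L_def by (intro tendsto_intros limA)
  have ev1: "eventually (\<lambda>M::real. M \<ge> 1) at_top" by (rule eventually_ge_at_top)
  have "eventually (\<lambda>M. 2*eta^2*sqrt (N/M) < 1) at_top"
  proof -
    have "((\<lambda>M. 2*eta^2*sqrt (N/M)) \<longlongrightarrow> 2*eta^2*0) at_top"
      by (intro tendsto_intros lims)
    then show ?thesis by (rule order_tendstoD) simp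
  qed
  note ev2 = this
  have limT: "(totalQFI eta N \<longlongrightarrow> L) at_top"
  proof (rule tendsto_sandwich[OF _ _ limlo limhi])
    show "eventually (\<lambda>M. 4*N*max 1 (HH eta (N/M)) \<le> totalQFI eta N M) at_top"
      using ev1 by eventually_elim (rule T_lower, use assms N in auto)
    show "eventually (\<lambda>M. totalQFI eta N M \<le> 4*N*max (1/(1-2*eta^2*sqrt (N/M))) (HH eta 0)) at_top"
      using ev1 ev2 by eventually_elim (rule T_upper2, use assms N in auto)
  qed
  have bnd: "\<And>M. M \<in> {1..} \<Longrightarrow> totalQFI eta N M \<le> max (totalQFI eta N 1) (4*N*HH eta 0)"
    using T_bound1 assms N by auto
  have bdd: "bdd_above (totalQFI eta N ` {1..})"
    using bnd by (intro bdd_aboveI2) 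
  have le1: "(SUP M\<in>{1..}. totalQFI eta N M) \<le> max (totalQFI eta N 1) L"
  proof (rule cSUP_least)
    show "{1..} \<noteq> ({}::real set)" by auto
    fix M :: real assume "M \<in> {1..}"
    then have "totalQFI eta N M \<le> max (totalQFI eta N 1) (4*N*HH eta 0)" by (rule bnd)
    also have "4*N*HH eta 0 \<le> L" unfolding L_def using N by simp
    then have "max (totalQFI eta N 1) (4*N*HH eta 0) \<le> max (totalQFI eta N 1) L" by simp
    finally show "totalQFI eta N M \<le> max (totalQFI eta N 1) L" .
  qed
  have ge1: "totalQFI eta N 1 \<le> (SUP M\<in>{1..}. totalQFI eta N M)"
    by (rule cSUP_upper[OF _ bdd]) auto
  have ge2: "L \<le> (SUP M\<in>{1..}. totalQFI eta N M)"
  proof (rule tendsto_le[OF _ tendsto_const limT])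
    show "at_top \<noteq> (bot :: real filter)" by simp
    show "eventually (\<lambda>M. totalQFI eta N M \<le> (SUP M\<in>{1..}. totalQFI eta N M)) at_top"
      using ev1 by eventually_elim (rule cSUP_upper[OF _ bdd], auto)
  qed
  have "(SUP M\<in>{1..}. totalQFI eta N M) = max (totalQFI eta N 1) L"
    using le1 ge1 ge2 by simp
  then show ?thesis using limT bdd unfolding N_def by blast
qed

end
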